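(* Let $f:\mathbb{R}^p\times\mathbb{R}^N\to\mathbb{R}$ be differentiable with $M$-Lipschitz joint gradient, i.e. there is $M>0$ with $\|(\nabla_xf(x_1,z_1)-\nabla_xf(x_2,z_2),\nabla_zf(x_1,z_1)-\nabla_zf(x_2,z_2))\|\le M\|(x_1-x_2,z_1-z_2)\|$ for all $x_1,x_2,z_1,z_2$, and let $g:\mathbb{R}^p\to\mathbb{R}\cup\{\infty\}$ and $h:\mathbb{R}^N\to\mathbb{R}\cup\{\infty\}$ be proper, lower semicontinuous and directionally differentiable. Let $x_t\in\mathbb{R}^p$, $z_t\in\mathbb{R}^N$, $\eta_t^x,\eta_t^z>0$, and $$x_{t+1}\in\operatorname{Prox}_{g/\eta_t^x}\Big(x_t-\tfrac1{\eta_t^x}\nabla_xf(x_t,z_t)\Big),\qquad z_{t+1}\in\operatorname{Prox}_{h/\eta_t^z}\Big(z_t-\tfrac1{\eta_t^z}\nabla_zf(x_{t+1},z_t)\Big).$$ Define $\epsilon_t^x:=\eta_t^x(x_{t+1}-x_t)+\nabla_xf(x_t,z_t)-\nabla_xf(x_{t+1},z_{t+1})$ and $\epsilon_t^z:=\eta_t^z(z_{t+1}-z_t)+\nabla_zf(x_{t+1},z_t)-\nabla_zf(x_{t+1},z_{t+1})$. Then for all $d_x\in\mathbb{R}^p$, $d_z\in\mathbb{R}^N$, $$-\|\epsilon_t^x\|\|d_x\|-\|\epsilon_t^z\|\|d_z\|\le g'(x_{t+1};d_x)+h'(z_{t+1};d_z)+\langle\nabla_xf(x_{t+1},z_{t+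1}),d_x\rangle+\langle\nabla_zf(x_{t+1},z_{t+1}),d_z\rangle.$$
   Context: $\|\cdot\|$ is the Euclidean norm. $\operatorname{Prox}_{\phi/\eta}(y):=\operatorname{argmin}_{u}\{\tfrac1\eta\phi(u)+\tfrac12\|u-y\|^2\}$. The directional derivative is $\phi'(u;d):=\lim_{\tau\to+0}\frac{\phi(u+\tau d)-\phi(u)}{\tau}$ (possibly $+\infty$); directionally differentiable means this limit exists for all $d$ and all $u\in\operatorname{dom}\phi$. *)

theory Defs
  imports "HOL-Analysis.Analysis"
begin

text \<open>Extended-real valued functions phi : R^n -> R \<union> {+\<infinity>} are modelled as
  functions into ereal that never take the value -\<infinity>.\<close>

definition proper_fun :: "('a \<Rightarrow> ereal) \<Rightarrow> bool" where
  "proper_fun phi \<longleftrightarrow> (\<forall>x. phi x \<noteq> -\<infinity>) \<and> (\<exists>x. phi x \<noteq> \<infinity>)"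

definition lsc_fun :: "('a::topological_space \<Rightarrow> ereal) \<Rightarrow> bool" where
  "lsc_fun phi \<longleftrightarrow> (\<forall>x. phi x \<le> Liminf (at x) phi)"

definition edom :: "('a \<Rightarrow> ereal) \<Rightarrow> 'a set" where
  "edom phi = {x. phi x < \<infinity>}"

definition dir_quot :: "('a::real_vector \<Rightarrow> ereal) \<Rightarrow> 'a \<Rightarrow> 'a \<Rightarrow> real \<Rightarrow> ereal" where
  "dir_quot phi u d \<tau> = (phi (u + \<tau> *\<^sub>R d) - phi u) / ereal \<tau>"

definition dir_differentiable :: "('a::real_normed_vector \<Rightarrow> ereal) \<Rightarrow> bool" where
  "dir_differentiable phi \<longleftrightarrow>
     (\<forall>u\<in>edom phi. \<forall>d. \<exists>L. (dir_quot phi u d \<longlongrightarrow> L) (at_right 0))"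

definition dir_deriv :: "('a::real_normed_vector \<Rightarrow> ereal) \<Rightarrow> 'a \<Rightarrow> 'a \<Rightarrow> ereal" where
  "dir_deriv phi u d = Lim (at_right 0) (dir_quot phi u d)"

text \<open>u \<in> Prox_{phi/eta}(y), i.e. u minimises (1/eta) phi(v) + 1/2 |v - y|^2.\<close>
definition in_prox :: "('a::real_normed_vector \<Rightarrow> ereal) \<Rightarrow> real \<Rightarrow> 'a \<Rightarrow> 'a \<Rightarrow> bool" where
  "in_prox phi \<eta> y u \<longleftrightarrow>
     (\<forall>v. ereal (1/\<eta>) * phi u + ereal (norm (u - y)^2 / 2)
          \<le> ereal (1/\<eta>) * phi v + ereal (norm (v - y)^2 / 2))"

end

theory Submission
  imports Defs
begin

lemma prox_dir:
  fixes phi :: "'a::real_inner \<Rightarrow> ereal"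
  assumes pr: "proper_fun phi" and dd: "dir_differentiable phi" and eta: "\<eta> > 0"
    and px: "in_prox phi \<eta> y u"
  shows "ereal (- (\<eta> * ((u - y) \<bullet> d))) \<le> dir_deriv phi u d"
proof -
  obtain x0 where x0: "phi x0 \<noteq> \<infinity>" and nm: "\<And>x. phi x \<noteq> -\<infinity>"
    using pr unfolding proper_fun_def by blast
  obtain c where c: "phi x0 = ereal c" using x0 nm[of x0] by (cases "phi x0") auto
  have "phi u \<noteq> \<infinity>"
  proof
    assume inf: "phi u = \<infinity>"
    have "ereal (1/\<eta>) * phi u + ereal (norm (u - y)^2 / 2)
          \<le> ereal (1/\<eta>) * phi x0 + ereal (norm (x0 - y)^2 / 2)"
      using px unfolding in_prox_def by blast
    then show False using inf c eta by simp
  qed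
  then obtain a where a: "phi u = ereal a" using nm[of u] by (cases "phi u") auto
  have "u \<in> edom phi" using a unfolding edom_def by simp
  then obtain L where L: "(dir_quot phi u d \<longlongrightarrow> L) (at_right 0)"
    using dd unfolding dir_differentiable_def by blast
  have DL: "dir_deriv phi u d = L"
    unfolding dir_deriv_def using L by (simp add: tendsto_Lim)
  define F where "F = (\<lambda>\<tau>::real. ereal (- (\<eta> * ((u - y) \<bullet> d)) - \<eta> * \<tau> * (norm d)^2 / 2))"
  have FL: "(F \<longlongrightarrow> ereal (- (\<eta> * ((u - y) \<bullet> d)))) (at_right 0)"
  proof -
    have "((\<lambda>\<tau>::real. - (\<eta> * ((u - y) \<bullet> d)) - \<eta> * \<tau> * (norm d)^2 / 2) \<longlongrightarrow>
           - (\<eta> * ((u - y) \<bullet> d)) - \<eta> * 0 * (norm d)^2 / 2) (at_right 0)"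
      by (intro tendsto_intros) auto
    then show ?thesis unfolding F_def using tendsto_ereal by fastforce
  qed
  have ev: "\<forall>\<^sub>F \<tau> in at_right 0. F \<tau> \<le> dir_quot phi u d \<tau>"

  proof (intro eventually_at_rightI[of 0 1])
    fix \<tau> :: real assume "\<tau> \<in> {0<..<1}"
    then have tp: "\<tau> > 0" by simp
    show "F \<tau> \<le> dir_quot phi u d \<tau>"
    proof (cases "phi (u + \<tau> *\<^sub>R d)")
      case PInf
      then show ?thesis unfolding dir_quot_def using a tp by simp
    next
      case MInf
      then show ?thesis using nm by blast
    next
      case (real b)
      have "ereal (1/\<eta>) * phi u + ereal (norm (u - y)^2 / 2)
          \<le> ereal (1/\<eta>) * phi (u + \<tau> *\<^sub>R d) + ereal (norm ((u + \<tau> *\<^sub>R d) - y)^2 / 2)"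
        using px unfolding in_prox_def by blast
      then have i1: "a/\<eta> + norm (u - y)^2 / 2 \<le> b/\<eta> + norm ((u + \<tau> *\<^sub>R d) - y)^2 / 2"
        using a real by simp
      have nn: "norm ((u + \<tau> *\<^sub>R d) - y)^2 = norm (u - y)^2 + 2 * \<tau> * ((u - y) \<bullet> d) + \<tau>^2 * (norm d)^2"
      proof -
        have "(u + \<tau> *\<^sub>R d) - y = (u - y) + \<tau> *\<^sub>R d" by (simp add: algebra_simps)
        moreover have "norm ((u - y) + \<tau> *\<^sub>R d)^2 = norm (u - y)^2 + 2 * \<tau> * ((u - y) \<bullet> d) + \<tau>^2 * (norm d)^2"
          unfolding power2_norm_eq_inner
          by (simp add: inner_add_left inner_add_right power2_eq_square algebra_simps inner_diff_left inner_diff_right inner_commute[of d u] inner_commute[of d y])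
        ultimately show ?thesis by metis
      qed
      have i2: "a \<le> b + \<eta> * (\<tau> * ((u - y) \<bullet> d) + \<tau>^2 * (norm d)^2 / 2)"
      proof -
        have "a/\<eta> \<le> b/\<eta> + (\<tau> * ((u - y) \<bullet> d) + \<tau>^2 * (norm d)^2 / 2)"
          using i1 unfolding nn by (simp add: algebra_simps add_divide_distrib del: inner_diff_left; linarith)
        then have "\<eta> * (a/\<eta>) \<le> \<eta> * (b/\<eta> + (\<tau> * ((u - y) \<bullet> d) + \<tau>^2 * (norm d)^2 / 2))"
          using eta by (intro mult_left_mono) auto
        then show ?thesis using eta by (simp add: algebra_simps)
      qed
      have "- (\<eta> * ((u - y) \<bullet> d)) - \<eta> * \<tau> * (norm d)^2 / 2 \<le> (b - a) / \<tau>"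
      proof -
        have "\<tau> * (- (\<eta> * ((u - y) \<bullet> d)) - \<eta> * \<tau> * (norm d)^2 / 2) \<le> b - a"
          using i2 by (simp add: algebra_simps power2_eq_square)
        then show ?thesis using tp by (simp add: field_simps)
      qed
      then show ?thesis unfolding dir_quot_def F_def using a real tp by simp
    qed
  qed simp
  have "ereal (- (\<eta> * ((u - y) \<bullet> d))) \<le> L"
    by (rule tendsto_le[OF trivial_limit_at_right_real L FL ev])
  then show ?thesis using DL by simp
qed

theorem lemma2:
  fixes f :: "'a::euclidean_space \<times> 'b::euclidean_space \<Rightarrow> real"
    and gradx :: "'a \<Rightarrow> 'b \<Rightarrow> 'a" and gradz :: "'a \<Rightarrow> 'b \<Rightarrow> 'b"
    and g :: "'a \<Rightarrow> ereal" and h :: "'b \<Rightarrow> ereal"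
    and M \<eta>x \<eta>z :: real
    and xt xt1 :: 'a and zt zt1 :: 'b and dx :: 'a and dz :: 'b
  assumes f_deriv: "\<And>x z. (f has_derivative (\<lambda>(u, v). gradx x z \<bullet> u + gradz x z \<bullet> v)) (at (x, z))"
    and M_pos: "M > 0"
    and lip: "\<And>x1 x2 z1 z2. norm (gradx x1 z1 - gradx x2 z2, gradz x1 z1 - gradz x2 z2)
                 \<le> M * norm (x1 - x2, z1 - z2)"
    and g_proper: "proper_fun g" and g_lsc: "lsc_fun g" and g_dd: "dir_differentiable g"
    and h_proper: "proper_fun h" and h_lsc: "lsc_fun h" and h_dd: "dir_differentiable h"
    and ex_pos: "\<eta>x > 0" and ez_pos: "\<eta>z > 0"
    and x_step: "in_prox g \<eta>x (xt - (1/\<eta>x) *\<^sub>R gradx xt zt) xt1"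
    and z_step: "in_prox h \<eta>z (zt - (1/\<eta>z) *\<^sub>R gradz xt1 zt) zt1"
  shows "let \<epsilon>x = \<eta>x *\<^sub>R (xt1 - xt) + gradx xt zt - gradx xt1 zt1;
             \<epsilon>z = \<eta>z *\<^sub>R (zt1 - zt) + gradz xt1 zt - gradz xt1 zt1
         in ereal (- norm \<epsilon>x * norm dx - norm \<epsilon>z * norm dz)
            \<le> dir_deriv g xt1 dx + dir_deriv h zt1 dz
               + ereal (gradx xt1 zt1 \<bullet> dx + gradz xt1 zt1 \<bullet> dz)"
proof -
  define ex where "ex = \<eta>x *\<^sub>R (xt1 - xt) + gradx xt zt - gradx xt1 zt1"
  define ez where "ez = \<eta>z *\<^sub>R (zt1 - zt) + gradz xt1 zt - gradz xt1 zt1"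
  have gx: "ereal (- (\<eta>x * ((xt1 - (xt - (1/\<eta>x) *\<^sub>R gradx xt zt)) \<bullet> dx))) \<le> dir_deriv g xt1 dx"
    by (rule prox_dir[OF g_proper g_dd ex_pos x_step])
  have hz: "ereal (- (\<eta>z * ((zt1 - (zt - (1/\<eta>z) *\<^sub>R gradz xt1 zt)) \<bullet> dz))) \<le> dir_deriv h zt1 dz"
    by (rule prox_dir[OF h_proper h_dd ez_pos z_step])
  have ex1: "\<eta>x * ((xt1 - (xt - (1/\<eta>x) *\<^sub>R gradx xt zt)) \<bullet> dx) = (ex + gradx xt1 zt1) \<bullet> dx"
  proof -
    have "\<eta>x *\<^sub>R (xt1 - (xt - (1/\<eta>x) *\<^sub>R gradx xt zt)) = ex + gradx xt1 zt1"
      using ex_pos unfolding ex_def by (simp add: algebra_simps)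
    then show ?thesis by (metis inner_scaleR_left)
  qed
  have ez1: "\<eta>z * ((zt1 - (zt - (1/\<eta>z) *\<^sub>R gradz xt1 zt)) \<bullet> dz) = (ez + gradz xt1 zt1) \<bullet> dz"
  proof -
    have "\<eta>z *\<^sub>R (zt1 - (zt - (1/\<eta>z) *\<^sub>R gradz xt1 zt)) = ez + gradz xt1 zt1"
      using ez_pos unfolding ez_def by (simp add: algebra_simps)
    then show ?thesis by (metis inner_scaleR_left)
  qed
  have "ereal (- norm ex * norm dx - norm ez * norm dz)
        \<le> ereal (- ((ex + gradx xt1 zt1) \<bullet> dx)) + ereal (- ((ez + gradz xt1 zt1) \<bullet> dz))
           + ereal (gradx xt1 zt1 \<bullet> dx + gradz xt1 zt1 \<bullet> dz)"
  proof -
    have "ex \<bullet> dx \<le> norm ex * norm dx" by (rule norm_cauchy_schwarz)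
    moreover have "ez \<bullet> dz \<le> norm ez * norm dz" by (rule norm_cauchy_schwarz)
    ultimately show ?thesis by (simp add: inner_add_left)
  qed
  also have "\<dots> \<le> dir_deriv g xt1 dx + dir_deriv h zt1 dz
               + ereal (gradx xt1 zt1 \<bullet> dx + gradz xt1 zt1 \<bullet> dz)"
    using gx hz ex1 ez1 by (intro add_mono) auto
  finally show ?thesis unfolding ex_def ez_def Let_def .
qed

end
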